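(* Let $(X,d)$ be a metric space with bounded geometry, fix $x\in X$, and write $V_\delta=V_\delta^x$. (i) If $\lim_{l\to\infty}\frac1l\log V_\delta(l)=0$ for every $\delta>0$, then $h_\infty(X)=0$. (ii) If there exists $\delta>0$ with $\limsup_{l\to\infty}\frac1l\log V_\delta(l)>0$, then $h_\infty(X)=\infty$.
   Context: Bounded geometry: for every $r>0$ there is $C(r)\in\mathbb N$ bounding the cardinality of every closed ball of radius $r$. For $\delta>0$ a $\delta$-path is a sequence $(x_0,\dots,x_n)$ with $d(x_{i-1},x_i)\le\delta$; $[x]_\delta$ is the set of points connected to $x$ by a $\delta$-path; $B_\delta(x_0,n)=\{x_n:\exists\ \delta\text{-path }(x_0,\dots,x_n)\}$. Define $V_\delta^x(l)=\sup_{x_0\in[x]_\delta}|B_\delta(x_0,l)|$. Coarse entropy $h_\infty(X)=\lim_{\delta\to\infty}\lim_{R\to\infty}\limsup_{n\to\infty}\frac1n\log s(n,R,\delta,x_0)$, where $s(n,R,\delta,x_0)$ is the supremum of cardinalities of $R$-separated sets of $\delta$-paths of length $n$ starting at $x_0$, paths compared by $\max_i d(x_i,y_i)$. *)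

theory Defs
  imports "HOL-Analysis.Analysis"
begin

text \<open>The metric space X is the whole type 'a (class metric_space).\<close>

definition bounded_geometry :: "'a::metric_space itself \<Rightarrow> bool" where
  "bounded_geometry _ \<longleftrightarrow>
     (\<forall>r>0. \<exists>C::nat. \<forall>y::'a. finite (cball y r) \<and> card (cball y r) \<le> C)"

text \<open>A delta-path (x_0,...,x_n) is a nonempty list; its length n is length xs - 1.\<close>
definition dpath :: "real \<Rightarrow> 'a::metric_space list \<Rightarrow> bool" where
  "dpath \<delta> xs \<longleftrightarrow> xs \<noteq> [] \<and> (\<forall>i. Suc i < length xs \<longrightarrow> dist (xs ! i) (xs ! Suc i) \<le> \<delta>)"

definition dcomp :: "real \<Rightarrow> 'a::metric_space \<Rightarrow> 'a set" where
  "dcomp \<delta> x = {y. \<exists>xs. dpath \<delta> xs \<and> hd xs = x \<and> last xs = y}"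

definition dpaths :: "real \<Rightarrow> 'a::metric_space \<Rightarrow> nat \<Rightarrow> 'a list set" where
  "dpaths \<delta> x0 n = {xs. dpath \<delta> xs \<and> length xs = Suc n \<and> hd xs = x0}"

definition dball :: "real \<Rightarrow> 'a::metric_space \<Rightarrow> nat \<Rightarrow> 'a set" where
  "dball \<delta> x0 n = last ` dpaths \<delta> x0 n"

definition Vol :: "'a::metric_space \<Rightarrow> real \<Rightarrow> nat \<Rightarrow> ereal" where
  "Vol x \<delta> l = (SUP x0\<in>dcomp \<delta> x. ereal (real (card (dball \<delta> x0 l))))"

definition pdist :: "'a::metric_space list \<Rightarrow> 'a list \<Rightarrow> real" where
  "pdist xs ys = Max {dist (xs ! i) (ys ! i) | i. i < length xs}"

definition separated :: "real \<Rightarrow> 'a::metric_space list set \<Rightarrow> bool" where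
  "separated R P \<longleftrightarrow> (\<forall>p\<in>P. \<forall>q\<in>P. p \<noteq> q \<longrightarrow> pdist p q > R)"

definition sepnum :: "nat \<Rightarrow> real \<Rightarrow> real \<Rightarrow> 'a::metric_space \<Rightarrow> ereal" where
  "sepnum n R \<delta> x0 =
     (SUP P\<in>{P. finite P \<and> P \<subseteq> dpaths \<delta> x0 n \<and> separated R P}. ereal (real (card P)))"

definition lnE :: "ereal \<Rightarrow> ereal" where
  "lnE v = (if v = \<infinity> then \<infinity> else if v \<le> 0 then -\<infinity> else ereal (ln (real_of_ereal v)))"

definition coarse_entropy :: "'a::metric_space \<Rightarrow> ereal" where
  "coarse_entropy x0 =
     Lim at_top (\<lambda>\<delta>::real. Lim at_top (\<lambda>R::real.
        limsup (\<lambda>n. ereal (1 / real n) * lnE (sepnum n R \<delta> x0))))"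

end

theory Submission
  imports Defs
begin


lemma dpath_dist:
  assumes "dpath \<delta> p" "i \<le> j" "j < length p"
  shows "dist (p!i) (p!j) \<le> real (j - i) * \<delta>"
  using assms(2,3)
proof (induction j)
  case 0 then show ?case by simp
next
  case (Suc j)
  show ?case
  proof (cases "i = Suc j")
    case True then show ?thesis by simp
  next
    case False
    then have ij: "i \<le> j" using Suc by simp
    have "dist (p!i) (p!Suc j) \<le> dist (p!i) (p!j) + dist (p!j) (p!Suc j)" by (rule dist_triangle)
    also have "\<dots> \<le> real (j - i) * \<delta> + \<delta>"
      using Suc ij assms(1) unfolding dpath_def by (intro add_mono) auto
    also have "\<dots> = real (Suc j - i) * \<delta>" using ij by (simp add: Suc_diff_le algebra_simps)
    finally show ?thesis .
  qed
qed

lemma dball_iff: "y \<in> dball \<delta> z l \<longleftrightarrow> (\<exists>p. dpath \<delta> p \<and> length p = Suc l \<and> hd p = z \<and> last p = y)"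
  unfolding dball_def dpaths_def by auto

lemma dpath_take_drop:
  assumes "dpath \<delta> p" "i \<le> j" "j < length p"
  shows "dpath \<delta> (take (Suc j - i) (drop i p))"
  using assms unfolding dpath_def by auto

lemma dpath_sub_dball:
  assumes "dpath \<delta> p" "i \<le> j" "j < length p"
  shows "p!j \<in> dball \<delta> (p!i) (j - i)"
proof -
  let ?q = "take (Suc j - i) (drop i p)"
  have "dpath \<delta> ?q" by (rule dpath_take_drop[OF assms])
  moreover have "length ?q = Suc (j - i)" using assms by simp
  moreover have "hd ?q = p!i" using assms by (simp add: hd_take hd_drop_conv_nth)
  moreover have "last ?q = p!j" using assms
    by (simp add: last_conv_nth Suc_diff_le)
  ultimately show ?thesis unfolding dball_iff by blast
qed

lemma dpath_prefix_dcomp: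
  assumes "dpath \<delta> p" "i < length p"
  shows "p!i \<in> dcomp \<delta> (hd p)"
proof -
  have "p!i \<in> dball \<delta> (p!0) (i - 0)" by (rule dpath_sub_dball) (use assms in auto)
  then show ?thesis unfolding dball_iff dcomp_def using assms
    by (auto simp: hd_conv_nth dpath_def)
qed

lemma dpath_append:
  assumes "dpath \<delta> p" "dpath \<delta> q" "last p = hd q"
  shows "dpath \<delta> (p @ tl q)"
  unfolding dpath_def
proof (intro conjI allI impI)
  show "p @ tl q \<noteq> []" using assms(1) by (simp add: dpath_def)
  fix i assume i: "Suc i < length (p @ tl q)"
  have pne: "p \<noteq> []" "q \<noteq> []" using assms by (auto simp: dpath_def)
  consider "Suc i < length p" | "Suc i = length p" | "Suc i > length p" by linarith
  then show "dist ((p @ tl q) ! i) ((p @ tl q) ! Suc i) \<le> \<delta>"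
  proof cases
    case 1 then show ?thesis using assms(1) by (simp add: nth_append dpath_def)
  next
    case 2
    then have "i = length p - 1" by simp
    then have "(p @ tl q) ! i = last p" using pne by (simp add: nth_append last_conv_nth)
    moreover have "(p @ tl q) ! Suc i = q ! 1" using 2 i pne by (simp add: nth_append nth_tl)
    moreover have "last p = q ! 0" using assms(3) pne by (simp add: hd_conv_nth)
    moreover have "1 < length q" using i 2 by simp
    ultimately show ?thesis using assms(2) by (auto simp: dpath_def)
  next
    case 3
    then obtain k where k: "i = length p + k" by (metis less_imp_Suc_add add_Suc_right less_Suc_eq_le le_Suc_ex)
    have "(p @ tl q) ! i = q ! Suc k" "(p @ tl q) ! Suc i = q ! Suc (Suc k)"
      using k i pne by (simp_all add: nth_append nth_tl)
    moreover have "Suc (Suc k) < length q" using k i by simp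
    ultimately show ?thesis using assms(2) by (simp add: dpath_def)
  qed
qed

lemma dpath_rev: "dpath \<delta> p \<Longrightarrow> dpath \<delta> (rev p)"
  unfolding dpath_def
proof (intro conjI allI impI)
  assume a: "p \<noteq> [] \<and> (\<forall>i. Suc i < length p \<longrightarrow> dist (p ! i) (p ! Suc i) \<le> \<delta>)"
  then show "rev p \<noteq> []" by simp
  fix i assume i: "Suc i < length (rev p)"
  let ?j = "length p - Suc (Suc i)"
  have "rev p ! i = p ! Suc ?j" "rev p ! Suc i = p ! ?j" using i by (simp_all add: rev_nth Suc_diff_Suc)
  moreover have "Suc ?j < length p" using i by simp
  ultimately show "dist (rev p ! i) (rev p ! Suc i) \<le> \<delta>" using a by (simp add: dist_commute)
qed

lemma dpath_mono: "dpath \<delta> p \<Longrightarrow> \<delta> \<le> \<delta>' \<Longrightarrow> dpath \<delta>' p"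
  unfolding dpath_def by force

lemma dpath_replicate: "0 \<le> \<delta> \<Longrightarrow> dpath \<delta> (replicate (Suc n) x)"
  unfolding dpath_def by (simp del: replicate_Suc)



lemma dball_subset_cball: "0 \<le> \<delta> \<Longrightarrow> dball \<delta> z l \<subseteq> cball z (real l * \<delta>)"
proof
  fix y assume d: "0 \<le> \<delta>" and "y \<in> dball \<delta> z l"
  then obtain p where p: "dpath \<delta> p" "length p = Suc l" "hd p = z" "last p = y"
    unfolding dball_iff by blast
  have "dist (p!0) (p!l) \<le> real (l - 0) * \<delta>" by (rule dpath_dist) (use p in auto)
  moreover have "p!0 = z" "p!l = y" using p by (auto simp: hd_conv_nth last_conv_nth dpath_def)
  ultimately show "y \<in> cball z (real l * \<delta>)" by (simp add: mem_cball)
qed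

lemma bg_cball:
  assumes "bounded_geometry TYPE('a::metric_space)" "r > 0"
  obtains C :: nat where "\<And>y::'a. finite (cball y r) \<and> card (cball y r) \<le> C"
  using assms unfolding bounded_geometry_def by blast

lemma finite_dball:
  assumes "bounded_geometry TYPE('a::metric_space)" "0 \<le> \<delta>"
  shows "finite (dball \<delta> (z::'a) l)"
proof -
  have pos: "0 < real l * \<delta> + 1" using assms(2) by (simp add: add_nonneg_pos)
  obtain C :: nat where "\<And>y::'a. finite (cball y (real l * \<delta> + 1)) \<and> card (cball y (real l * \<delta> + 1)) \<le> C"
    using bg_cball[OF assms(1) pos] by blast
  moreover have "dball \<delta> z l \<subseteq> cball z (real l * \<delta> + 1)"
    using dball_subset_cball[OF assms(2)] by fastforce
  ultimately show ?thesis by (meson finite_subset)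
qed

lemma self_in_dball: "0 \<le> \<delta> \<Longrightarrow> z \<in> dball \<delta> z l"
  unfolding dball_iff by (rule exI[of _ "replicate (Suc l) z"]) (simp add: dpath_replicate del: replicate_Suc)

lemma self_in_dcomp: "x \<in> dcomp \<delta> x"
  unfolding dcomp_def dpath_def by (rule CollectI, rule exI[of _ "[x]"]) simp

lemma card_dball_ge1:
  assumes "bounded_geometry TYPE('a::metric_space)" "0 \<le> \<delta>"
  shows "1 \<le> card (dball \<delta> (z::'a) l)"
  using finite_dball[OF assms] self_in_dball[OF assms(2)]
  by (metis One_nat_def Suc_leI card_gt_0_iff empty_iff)

lemma Vol_ge1:
  assumes "bounded_geometry TYPE('a::metric_space)" "0 \<le> \<delta>"
  shows "1 \<le> Vol (x::'a) \<delta> l"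
proof -
  have "ereal (real (card (dball \<delta> x l))) \<le> Vol x \<delta> l"
    unfolding Vol_def by (rule SUP_upper) (rule self_in_dcomp)
  moreover have "1 \<le> real (card (dball \<delta> x l))" using card_dball_ge1[OF assms] by simp
  ultimately show ?thesis by (metis ereal_less_eq(3) one_ereal_def order_trans)
qed

lemma sepnum_ge1:
  assumes "0 \<le> \<delta>" shows "1 \<le> sepnum n R \<delta> x0"
proof -
  let ?P = "{replicate (Suc n) x0}"
  have "?P \<in> {P. finite P \<and> P \<subseteq> dpaths \<delta> x0 n \<and> separated R P}"
    using assms by (simp add: dpaths_def dpath_replicate separated_def del: replicate_Suc)
  then have "ereal (real (card ?P)) \<le> sepnum n R \<delta> x0" unfolding sepnum_def by (rule SUP_upper)
  then show ?thesis by (simp add: one_ereal_def)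
qed

lemma lnE_ereal: "r > 0 \<Longrightarrow> lnE (ereal r) = ereal (ln r)"
  unfolding lnE_def by simp

lemma lnE_mono:
  assumes "1 \<le> a" "a \<le> b" shows "lnE a \<le> lnE b"
proof (cases "b = \<infinity>")
  case True then show ?thesis by (simp add: lnE_def)
next
  case False
  then obtain rb where rb: "b = ereal rb" using assms by (cases b) auto
  obtain ra where ra: "a = ereal ra" using assms False by (cases a) auto
  have "1 \<le> ra" "ra \<le> rb" using assms ra rb by auto
  then show ?thesis using ra rb by (simp add: lnE_def)
qed



definition chains :: "'b \<Rightarrow> 'b set \<Rightarrow> ('b \<Rightarrow> 'b set) \<Rightarrow> nat \<Rightarrow> 'b list set" where
  "chains x D f q = {zs. length zs = Suc q \<and> hd zs = x \<and> set zs \<subseteq> D \<and> (\<forall>j<q. zs!Suc j \<in> f (zs!j))}"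

lemma chains_card:
  assumes fin: "\<And>z. z \<in> D \<Longrightarrow> finite (f z)" and bd: "\<And>z. z \<in> D \<Longrightarrow> real (card (f z)) \<le> M"
    and M: "0 \<le> M"
  shows "finite (chains x D f q) \<and> real (card (chains x D f q)) \<le> M ^ q"
proof (induction q)
  case 0
  have "chains x D f 0 \<subseteq> {[x]}" unfolding chains_def by (auto simp: length_Suc_conv)
  then have "finite (chains x D f 0)" "card (chains x D f 0) \<le> 1"
    using finite_subset card_mono by (fastforce, metis card_mono finite.intros is_singletonI is_singleton_altdef)
  then show ?case by simp
next
  case (Suc q)
  let ?S = "SIGMA zs:chains x D f q. f (last zs)"
  have sub: "chains x D f (Suc q) \<subseteq> (\<lambda>(zs, z). zs @ [z]) ` ?S"
  proof
    fix zs assume zs: "zs \<in> chains x D f (Suc q)"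
    let ?ys = "butlast zs" and ?z = "last zs"
    have len: "length zs = Suc (Suc q)" using zs by (simp add: chains_def)
    have ne: "zs \<noteq> []" using len by auto
    have eq: "zs = ?ys @ [?z]" using ne by simp
    have ylen: "length ?ys = Suc q" using len by simp
    have "hd ?ys = hd zs" using len by (cases zs) (auto simp: butlast_def split: list.splits)
    moreover have "set ?ys \<subseteq> D" using zs by (auto simp: chains_def dest: in_set_butlastD)
    moreover have "\<forall>j<q. ?ys!Suc j \<in> f (?ys!j)" using zs len by (auto simp: chains_def nth_butlast)
    ultimately have ys: "?ys \<in> chains x D f q" using zs ylen by (simp add: chains_def)
    have "last ?ys = ?ys ! q" using ylen by (metis diff_Suc_1 last_conv_nth list.size(3) nat.distinct(1))
    also have "\<dots> = zs ! q" using ylen by (simp add: nth_butlast)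
    finally have "last ?ys = zs ! q" .
    moreover have "?z = zs ! Suc q" using len ne by (simp add: last_conv_nth)
    moreover have "zs ! Suc q \<in> f (zs ! q)" using zs by (simp add: chains_def)
    ultimately have "?z \<in> f (last ?ys)" by simp
    with ys eq show "zs \<in> (\<lambda>(zs, z). zs @ [z]) ` ?S" by (intro image_eqI[of _ _ "(?ys, ?z)"]) auto
  qed
  have lastD: "last zs \<in> D" if "zs \<in> chains x D f q" for zs
    using that unfolding chains_def by (auto intro!: subsetD[of "set zs" D] last_in_set)
  have finS: "finite ?S" using Suc.IH fin lastD by (intro finite_SigmaI) auto
  have "real (card (chains x D f (Suc q))) \<le> real (card ?S)"
    using sub finS by (meson card_image_le card_mono finite_imageI le_trans of_nat_le_iff)
  also have "card ?S = (\<Sum>zs\<in>chains x D f q. card (f (last zs)))"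
    using Suc.IH fin lastD by (intro card_SigmaI) auto
  also have "real \<dots> = (\<Sum>zs\<in>chains x D f q. real (card (f (last zs))))" by simp
  also have "\<dots> \<le> (\<Sum>zs\<in>chains x D f q. M)" using bd lastD by (intro sum_mono) auto
  also have "\<dots> = real (card (chains x D f q)) * M" by simp
  also have "\<dots> \<le> M ^ q * M" using Suc.IH M by (intro mult_right_mono) auto
  finally show ?case using finite_subset[OF sub] finS by (simp add: mult.commute)
qed



lemma sepnum_upper:
  fixes x :: "'a::metric_space"
  assumes bg: "bounded_geometry TYPE('a)" and d: "0 < \<delta>" and k: "1 \<le> k"
    and bd: "\<And>z. z \<in> dcomp \<delta> x \<Longrightarrow> real (card (dball \<delta> z k)) \<le> M"
    and R: "2 * real k * \<delta> \<le> R"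
  shows "sepnum n R \<delta> x \<le> ereal (M ^ (n div k))"
proof -
  define q where "q = n div k"
  define T where "T = chains x (dcomp \<delta> x) (\<lambda>z. dball \<delta> z k) q"
  have M0: "0 \<le> M" using bd[OF self_in_dcomp[of x \<delta>]] by linarith
  have T: "finite T" "real (card T) \<le> M ^ q"
    using chains_card[of "dcomp \<delta> x" "\<lambda>z. dball \<delta> z k" M x q] finite_dball[OF bg] d bd M0
    unfolding T_def by auto
  define \<sigma> where "\<sigma> p = map (\<lambda>j. p!(j*k)) [0..<Suc q]" for p :: "'a list"
  have qk: "q * k \<le> n" unfolding q_def by (simp add: div_times_less_eq_dividend)
  have mem: "\<sigma> p \<in> T" if p: "p \<in> dpaths \<delta> x n" for p
  proof -
    have pp: "dpath \<delta> p" "length p = Suc n" "hd p = x" using p by (auto simp: dpaths_def)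
    have jk: "j * k \<le> n" if "j \<le> q" for j using that qk by (meson le_trans mult_le_mono1)
    have "hd (\<sigma> p) = x" using pp by (simp add: \<sigma>_def hd_map hd_conv_nth dpath_def del: upt_Suc)
    moreover have "set (\<sigma> p) \<subseteq> dcomp \<delta> x"
    proof
      fix z assume "z \<in> set (\<sigma> p)"
      then obtain j where j: "j \<le> q" "z = p!(j*k)" by (auto simp: \<sigma>_def less_Suc_eq_le simp del: upt_Suc)
      show "z \<in> dcomp \<delta> x" using dpath_prefix_dcomp[OF pp(1), of "j*k"] jk[OF j(1)] j pp by auto
    qed
    moreover have "\<sigma> p ! Suc j \<in> dball \<delta> (\<sigma> p ! j) k" if j: "j < q" for j
    proof -
      have a: "\<sigma> p ! Suc j = p ! (j*k + k)" "\<sigma> p ! j = p ! (j*k)" using j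
        by (simp_all add: \<sigma>_def nth_map del: upt_Suc) (simp add: nth_upt add.commute)
      have "j*k + k \<le> n" using jk[of "Suc j"] j by simp
      then have "p ! (j*k+k) \<in> dball \<delta> (p!(j*k)) (j*k + k - j*k)"
        using pp by (intro dpath_sub_dball) auto
      then show ?thesis using a by simp
    qed
    ultimately show ?thesis unfolding T_def chains_def \<sigma>_def by simp
  qed
  have close: "pdist p p' \<le> R" if p: "p \<in> dpaths \<delta> x n" and p': "p' \<in> dpaths \<delta> x n"
    and eq: "\<sigma> p = \<sigma> p'" for p p'
  proof -
    have pp: "dpath \<delta> p" "length p = Suc n" using p by (auto simp: dpaths_def)
    have pp': "dpath \<delta> p'" "length p' = Suc n" using p' by (auto simp: dpaths_def)
    have "dist (p!i) (p'!i) \<le> R" if i: "i < Suc n" for i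
    proof -
      define j where "j = i div k"
      have jq: "j \<le> q" unfolding j_def q_def using i by (simp add: div_le_mono)
      have jki: "j * k \<le> i" unfolding j_def by (simp add: div_times_less_eq_dividend)
      have "i - j * k = i mod k" unfolding j_def by (simp add: minus_div_mult_eq_mod)
      then have ik: "i - j * k < k" using k by simp
      have "p ! (j*k) = \<sigma> p ! j" "p' ! (j*k) = \<sigma> p' ! j" using jq
        by (simp_all add: \<sigma>_def nth_map nth_upt del: upt_Suc)
      then have same: "p ! (j*k) = p' ! (j*k)" using eq by simp
      have "dist (p!i) (p'!i) \<le> dist (p!(j*k)) (p!i) + dist (p'!(j*k)) (p'!i)"
        using same dist_triangle2[of "p!i" "p'!i" "p!(j*k)"] by (simp add: dist_commute)
      also have "\<dots> \<le> real (i - j*k) * \<delta> + real (i - j*k) * \<delta>"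
        using pp pp' i jki by (intro add_mono dpath_dist) auto
      also have "\<dots> \<le> real k * \<delta> + real k * \<delta>" using ik d by (intro add_mono mult_right_mono) auto
      finally show ?thesis using R by (simp add: algebra_simps)
    qed
    moreover have "finite {dist (p ! i) (p' ! i) |i. i < length p}" by simp
    moreover have "{dist (p ! i) (p' ! i) |i. i < length p} \<noteq> {}" using pp by auto
    ultimately show ?thesis unfolding pdist_def using pp by (intro Max.boundedI) auto
  qed
  show ?thesis unfolding sepnum_def
  proof (rule SUP_least)
    fix P assume "P \<in> {P. finite P \<and> P \<subseteq> dpaths \<delta> x n \<and> separated R P}"
    then have P: "finite P" "P \<subseteq> dpaths \<delta> x n" "separated R P" by auto
    have "inj_on \<sigma> P"
    proof (rule inj_onI)
      fix p p' assume "p \<in> P" "p' \<in> P" "\<sigma> p = \<sigma> p'"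
      then show "p = p'" using close[of p p'] P unfolding separated_def by force
    qed
    then have "card P \<le> card T" using mem P T(1) by (intro card_inj_on_le) auto
    then have "real (card P) \<le> M ^ (n div k)" using T(2) unfolding q_def by linarith
    then show "ereal (real (card P)) \<le> ereal (M ^ (n div k))" by simp
  qed
qed



lemma term_nonneg:
  assumes "0 \<le> \<delta>" shows "0 \<le> ereal (1 / real n) * lnE (sepnum n R \<delta> x)"
proof -
  have "lnE 1 \<le> lnE (sepnum n R \<delta> x)" using sepnum_ge1[OF assms] by (intro lnE_mono) auto
  moreover have "lnE 1 = 0" by (simp add: lnE_def zero_ereal_def)
  ultimately have "0 \<le> lnE (sepnum n R \<delta> x)" by simp
  then show ?thesis by (simp add: ereal_zero_le_0_iff)
qed

lemma E_nonneg:
  assumes "0 \<le> \<delta>" shows "0 \<le> limsup (\<lambda>n. ereal (1 / real n) * lnE (sepnum n R \<delta> x))"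
  by (rule le_Limsup) (auto intro!: always_eventually term_nonneg[OF assms])

lemma E_small:
  fixes x :: "'a::metric_space"
  assumes bg: "bounded_geometry TYPE('a)" and d: "0 < \<delta>"
    and hyp: "(\<lambda>l. ereal (1 / real l) * lnE (Vol x \<delta> l)) \<longlonglongrightarrow> 0"
    and e: "0 < \<epsilon>"
  shows "\<exists>R0. \<forall>R\<ge>R0. limsup (\<lambda>n. ereal (1 / real n) * lnE (sepnum n R \<delta> x)) \<le> ereal \<epsilon>"
proof -
  have "eventually (\<lambda>l. ereal (1 / real l) * lnE (Vol x \<delta> l) < ereal \<epsilon>) sequentially"
    using hyp e by (intro order_tendstoD(2)) auto
  then obtain N where N: "\<And>l. l \<ge> N \<Longrightarrow> ereal (1 / real l) * lnE (Vol x \<delta> l) < ereal \<epsilon>"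
    unfolding eventually_sequentially by blast
  define k where "k = max N 1"
  have k: "1 \<le> k" "k \<ge> N" unfolding k_def by auto
  have lt: "ereal (1 / real k) * lnE (Vol x \<delta> k) < ereal \<epsilon>" using N k by auto
  have V1: "1 \<le> Vol x \<delta> k" using Vol_ge1[OF bg] d by auto
  have "Vol x \<delta> k \<noteq> \<infinity>"
  proof
    assume "Vol x \<delta> k = \<infinity>"
    then have "ereal (1 / real k) * lnE (Vol x \<delta> k) = \<infinity>" using k by (simp add: lnE_def)
    then show False using lt by simp
  qed
  then obtain M where M: "Vol x \<delta> k = ereal M" using V1 by (cases "Vol x \<delta> k") auto
  have M1: "1 \<le> M" using V1 M by (simp add: one_ereal_def)
  have "ereal (1 / real k) * lnE (Vol x \<delta> k) = ereal (ln M / real k)"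
    using M M1 by (simp add: lnE_ereal)
  then have lnM: "ln M / real k < \<epsilon>" using lt by simp
  have bd: "real (card (dball \<delta> z k)) \<le> M" if "z \<in> dcomp \<delta> x" for z
  proof -
    have "ereal (real (card (dball \<delta> z k))) \<le> Vol x \<delta> k" unfolding Vol_def
      by (rule SUP_upper) (rule that)
    then show ?thesis using M by simp
  qed
  show ?thesis
  proof (intro exI allI impI)
    fix R assume R: "2 * real k * \<delta> \<le> R"
    have "eventually (\<lambda>n. ereal (1 / real n) * lnE (sepnum n R \<delta> x) \<le> ereal \<epsilon>) sequentially"
      unfolding eventually_sequentially
    proof (intro exI allI impI)
      fix n :: nat assume n: "1 \<le> n"
      define q where "q = n div k"
      have s: "sepnum n R \<delta> x \<le> ereal (M ^ q)"
        unfolding q_def by (rule sepnum_upper[OF bg d k(1) bd R])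
      have "lnE (sepnum n R \<delta> x) \<le> lnE (ereal (M ^ q))"
        using sepnum_ge1[of \<delta> n R x] d s by (intro lnE_mono) auto
      also have "\<dots> = ereal (real q * ln M)" using M1 by (simp add: lnE_ereal ln_realpow)
      finally have "ereal (1 / real n) * lnE (sepnum n R \<delta> x) \<le> ereal (1 / real n) * ereal (real q * ln M)"
        by (intro ereal_mult_left_mono) auto
      also have "\<dots> = ereal (real q / real n * ln M)" by simp
      also have "real q / real n * ln M \<le> 1 / real k * ln M"
      proof (intro mult_right_mono)
        show "0 \<le> ln M" using M1 by simp
        have "real q * real k \<le> real n" unfolding q_def
          by (metis div_times_less_eq_dividend of_nat_le_iff of_nat_mult)
        then show "real q / real n \<le> 1 / real k" using n k by (simp add: field_simps)
      qed
      then have "ereal (real q / real n * ln M) \<le> ereal \<epsilon>" using lnM by simp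
      finally show "ereal (1 / real n) * lnE (sepnum n R \<delta> x) \<le> ereal \<epsilon>" .
    qed
    then show "limsup (\<lambda>n. ereal (1 / real n) * lnE (sepnum n R \<delta> x)) \<le> ereal \<epsilon>"
      by (rule Limsup_bounded)
  qed
qed

lemma E_tendsto0:
  fixes x :: "'a::metric_space"
  assumes bg: "bounded_geometry TYPE('a)" and d: "0 < \<delta>"
    and hyp: "(\<lambda>l. ereal (1 / real l) * lnE (Vol x \<delta> l)) \<longlonglongrightarrow> 0"
  shows "((\<lambda>R. limsup (\<lambda>n. ereal (1 / real n) * lnE (sepnum n R \<delta> x))) \<longlongrightarrow> 0) at_top"
proof (rule order_tendstoI)
  fix a :: ereal assume "a < 0"
  then show "eventually (\<lambda>R. a < limsup (\<lambda>n. ereal (1 / real n) * lnE (sepnum n R \<delta> x))) at_top"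
  proof (intro always_eventually allI)
    fix R show "a < limsup (\<lambda>n. ereal (1 / real n) * lnE (sepnum n R \<delta> x))"
      using E_nonneg[of \<delta> R x] d \<open>a < 0\<close> by simp
  qed
next
  fix a :: ereal assume "0 < a"
  then obtain r where r: "0 < ereal r" "ereal r < a" using ereal_dense2 by blast
  then obtain R0 where "\<forall>R\<ge>R0. limsup (\<lambda>n. ereal (1 / real n) * lnE (sepnum n R \<delta> x)) \<le> ereal r"
    using E_small[OF bg d hyp, of r] by auto
  then show "eventually (\<lambda>R. limsup (\<lambda>n. ereal (1 / real n) * lnE (sepnum n R \<delta> x)) < a) at_top"
    unfolding eventually_at_top_linorder using r(2) by (meson le_less_trans)
qed

lemma part1:
  fixes x :: "'a::metric_space"
  assumes bg: "bounded_geometry TYPE('a)"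
    and hyp: "\<forall>\<delta>>0. ((\<lambda>l. ereal (1 / real l) * lnE (Vol x \<delta> l)) \<longlonglongrightarrow> 0)"
  shows "coarse_entropy x = 0"
proof -
  have "eventually (\<lambda>\<delta>::real. Lim at_top (\<lambda>R::real.
        limsup (\<lambda>n. ereal (1 / real n) * lnE (sepnum n R \<delta> x))) = 0) at_top"
    unfolding eventually_at_top_linorder
  proof (intro exI allI impI)
    fix \<delta> :: real assume "1 \<le> \<delta>"
    then have d: "0 < \<delta>" by simp
    show "Lim at_top (\<lambda>R::real. limsup (\<lambda>n. ereal (1 / real n) * lnE (sepnum n R \<delta> x))) = 0"
      using E_tendsto0[OF bg d] hyp d by (intro tendsto_Lim) auto
  qed
  then show ?thesis unfolding coarse_entropy_def
    by (intro tendsto_Lim) (auto intro: tendsto_eventually)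
qed



lemma compress:
  assumes p: "dpath \<delta> p" "length p = Suc L" and m: "1 \<le> m" and d: "0 \<le> \<delta>"
    and dd: "real m * \<delta> \<le> \<delta>'" and L: "L \<le> m * l'"
  shows "last p \<in> dball \<delta>' (hd p) l'"
proof -
  define q where "q = map (\<lambda>j. p ! min (j*m) L) [0..<Suc l']"
  have "dpath \<delta>' q" unfolding dpath_def
  proof (intro conjI allI impI)
    show "q \<noteq> []" by (simp add: q_def del: upt_Suc)
    fix j assume j: "Suc j < length q"
    then have j': "Suc j < Suc l'" by (simp add: q_def)
    have e: "q ! j = p ! min (j*m) L" "q ! Suc j = p ! min (Suc j*m) L" using j'
      by (simp_all add: q_def nth_map nth_upt del: upt_Suc)
    have le: "min (j*m) L \<le> min (Suc j*m) L" by (simp add: min.coboundedI1 min_le_iff_disj)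
    have "dist (p ! min (j*m) L) (p ! min (Suc j*m) L) \<le> real (min (Suc j*m) L - min (j*m) L) * \<delta>"
      using p le by (intro dpath_dist) auto
    also have "\<dots> \<le> real m * \<delta>"
    proof (intro mult_right_mono d)
      have "min (Suc j*m) L - min (j*m) L \<le> m" by (simp add: min_def) arith
      then show "real (min (Suc j*m) L - min (j*m) L) \<le> real m" by linarith
    qed
    finally show "dist (q ! j) (q ! Suc j) \<le> \<delta>'" using e dd by simp
  qed
  moreover have "length q = Suc l'" by (simp add: q_def del: upt_Suc)
  moreover have "hd q = hd p" using p by (simp add: q_def hd_map hd_conv_nth dpath_def del: upt_Suc)
  moreover have "last q = last p"
  proof -
    have "last q = q ! l'" by (simp add: q_def last_conv_nth del: upt_Suc)
    also have "\<dots> = p ! min (l'*m) L" by (simp add: q_def nth_map nth_upt del: upt_Suc)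
    also have "min (l'*m) L = L" using L by (simp add: mult.commute)
    finally show ?thesis using p by (simp add: last_conv_nth dpath_def)
  qed
  ultimately show ?thesis unfolding dball_iff by metis
qed

lemma sep_subset:
  fixes B :: "'a::metric_space set"
  assumes "finite B" "0 \<le> R"
  shows "\<exists>A\<subseteq>B. (\<forall>a\<in>A. \<forall>b\<in>A. a \<noteq> b \<longrightarrow> R < dist a b) \<and> B \<subseteq> (\<Union>a\<in>A. cball a R)"
  using assms(1)
proof (induction B rule: finite_induct)
  case empty then show ?case by auto
next
  case (insert b B)
  then obtain A where A: "A \<subseteq> B" "\<forall>a\<in>A. \<forall>b\<in>A. a \<noteq> b \<longrightarrow> R < dist a b" "B \<subseteq> (\<Union>a\<in>A. cball a R)"
    by blast
  show ?case
  proof (cases "b \<in> (\<Union>a\<in>A. cball a R)")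
    case True then show ?thesis using A by (intro exI[of _ A]) auto
  next
    case False
    then have "\<forall>a\<in>A. R < dist a b" by (auto simp: mem_cball not_le)
    then show ?thesis using A by (intro exI[of _ "insert b A"]) (auto simp: dist_commute assms(2))
  qed
qed

lemma first_diff:
  "length w = length w' \<Longrightarrow> w \<noteq> w' \<Longrightarrow> \<exists>u a b v v'. a \<noteq> b \<and> w = u @ a # v \<and> w' = u @ b # v'"
proof (induction w arbitrary: w')
  case Nil then show ?case by simp
next
  case (Cons c w)
  then obtain c' w'' where w': "w' = c' # w''" by (cases w') auto
  show ?case
  proof (cases "c = c'")
    case True
    then have "w \<noteq> w''" "length w = length w''" using Cons.prems w' by auto
    then obtain u a b v v' where "a \<noteq> b" "w = u @ a # v" "w'' = u @ b # v'" using Cons.IH by blast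
    then show ?thesis using True w' by (intro exI[of _ "c # u"]) auto
  next
    case False then show ?thesis using w' by (intro exI[of _ "[]"]) auto
  qed
qed



lemma many_paths:
  fixes x :: "'a::metric_space"
  assumes \<rho>: "dpath \<delta>' \<rho>" "hd \<rho> = x" "last \<rho> = x0" "length \<rho> = Suc L0"
    and A: "finite A" "A \<subseteq> dball \<delta>' x0 l" "\<forall>a\<in>A. \<forall>b\<in>A. a \<noteq> b \<longrightarrow> R < dist a b"
    and l: "1 \<le> l"
  shows "ereal (real (card A ^ k)) \<le> sepnum (L0 + 2 * l * k) R \<delta>' x"
proof -
  have "\<forall>a\<in>A. \<exists>p. dpath \<delta>' p \<and> length p = Suc l \<and> hd p = x0 \<and> last p = a"
    using A(2) unfolding dball_iff subset_iff by blast
  then obtain \<pi> where \<pi>: "\<And>a. a \<in> A \<Longrightarrow> dpath \<delta>' (\<pi> a) \<and> length (\<pi> a) = Suc l \<and> hd (\<pi> a) = x0 \<and> last (\<pi> a) = a"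
    by metis
  define e where "e a = \<pi> a @ tl (rev (\<pi> a))" for a
  define t where "t a = tl (e a)" for a
  have e: "dpath \<delta>' (e a)" "hd (e a) = x0" if "a \<in> A" for a
  proof -
    have "dpath \<delta>' (rev (\<pi> a))" using \<pi>[OF that] by (simp add: dpath_rev)
    moreover have "last (\<pi> a) = hd (rev (\<pi> a))" using \<pi>[OF that] by (simp add: hd_rev)
    ultimately show "dpath \<delta>' (e a)" unfolding e_def using \<pi>[OF that] by (intro dpath_append) auto
    show "hd (e a) = x0" using \<pi>[OF that] unfolding e_def by (cases "\<pi> a") auto
  qed
  have t: "length (t a) = 2 * l" "t a ! (l - 1) = a" "last (t a) = x0" "t a \<noteq> []" if "a \<in> A" for a
  proof -
    have len: "length (\<pi> a) = Suc l" using \<pi>[OF that] by simp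
    show "length (t a) = 2 * l" unfolding t_def e_def using len by simp
    then show "t a \<noteq> []" using l by auto
    have "t a ! (l - 1) = e a ! l" unfolding t_def using len l
      by (simp add: nth_tl e_def)
    also have "\<dots> = \<pi> a ! l" unfolding e_def using len by (simp add: nth_append)
    also have "\<dots> = a" using \<pi>[OF that] len by (metis diff_Suc_1 last_conv_nth list.size(3) nat.distinct(1))
    finally show "t a ! (l - 1) = a" .
    have tne: "t a \<noteq> []" using \<open>length (t a) = 2 * l\<close> l by auto
    have rne: "tl (rev (\<pi> a)) \<noteq> []" using len l by (cases "rev (\<pi> a)") auto
    have "last (t a) = last (e a)" using tne unfolding t_def by (simp add: last_tl)
    also have "\<dots> = last (tl (rev (\<pi> a)))" unfolding e_def using rne by simp
    also have "\<dots> = last (rev (\<pi> a))" using rne by (simp add: last_tl)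
    also have "\<dots> = x0" using \<pi>[OF that] by (simp add: last_rev)
    finally show "last (t a) = x0" .
  qed
  define W where "W w = \<rho> @ concat (map t w)" for w
  have Wlen: "length (W w) = Suc L0 + 2 * l * length w" if "set w \<subseteq> A" for w
    using that
  proof (induction w)
    case Nil then show ?case using \<rho> by (simp add: W_def)
  next
    case (Cons a w) then show ?case using t(1) by (simp add: W_def)
  qed
  have Wpath: "dpath \<delta>' (W w) \<and> last (W w) = x0" if "set w \<subseteq> A" for w
    using that
  proof (induction w rule: rev_induct)
    case Nil then show ?case using \<rho> by (simp add: W_def)
  next
    case (snoc a w)
    then have a: "a \<in> A" and IH: "dpath \<delta>' (W w)" "last (W w) = x0" by auto
    have eq: "W (w @ [a]) = W w @ tl (e a)" by (simp add: W_def t_def)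
    have "dpath \<delta>' (W (w @ [a]))" unfolding eq using IH e[OF a] by (intro dpath_append) auto
    moreover have "last (W (w @ [a])) = x0" using t[OF a] by (simp add: W_def)
    ultimately show ?case by simp
  qed
  have Whd: "hd (W w) = x" for w using \<rho> by (simp add: W_def dpath_def)
  define Ws where "Ws = {w. set w \<subseteq> A \<and> length w = k}"
  have diff: "(\<exists>i. R < dist (W w ! i) (W w' ! i) \<and> i < length (W w)) \<and> W w \<noteq> W w'"
    if w: "w \<in> Ws" "w' \<in> Ws" "w \<noteq> w'" for w w'
  proof -
    have "length w = length w'" using w unfolding Ws_def by auto
    then obtain u a b v v' where uv: "a \<noteq> b" "w = u @ a # v" "w' = u @ b # v'"
      using first_diff[of w w'] w(3) by blast
    have ab: "a \<in> A" "b \<in> A" using w uv unfolding Ws_def by auto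
    have uA: "set u \<subseteq> A" using w uv unfolding Ws_def by auto
    define i where "i = Suc L0 + 2 * l * length u + (l - 1)"
    have pre: "length (\<rho> @ concat (map t u)) = Suc L0 + 2 * l * length u"
      using Wlen[OF uA] by (simp add: W_def)
    have Wi: "W (u @ c # z) ! i = c" if "c \<in> A" for c z
    proof -
      have eq: "W (u @ c # z) = (\<rho> @ concat (map t u)) @ (t c @ concat (map t z))" by (simp add: W_def)
      have ii: "i = length (\<rho> @ concat (map t u)) + (l - 1)" using pre unfolding i_def by simp
      have "W (u @ c # z) ! i = (t c @ concat (map t z)) ! (l - 1)"
        unfolding eq ii by (rule nth_append_length_plus)
      also have "\<dots> = t c ! (l - 1)" using t[OF that] l by (intro nth_append_left) simp
      finally show ?thesis using t[OF that] by simp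
    qed
    have ia: "W w ! i = a" "W w' ! i = b" using Wi ab uv by auto
    have il: "i < length (W w)"
    proof -
      have "length (W w) = Suc L0 + 2 * l * length w" using w Wlen unfolding Ws_def by auto
      moreover have "length w = length u + Suc (length v)" using uv by simp
      ultimately show ?thesis unfolding i_def using l by (simp add: algebra_simps)
    qed
    have "R < dist a b" using A(3) ab uv(1) by blast
    then show ?thesis using ia il uv(1) by metis
  qed
  define P where "P = W ` Ws"
  have finWs: "finite Ws" unfolding Ws_def using A(1) by (rule finite_lists_length_eq)
  have inj: "inj_on W Ws" using diff by (meson inj_onI)
  have cardP: "card P = card A ^ k"
    unfolding P_def using card_image[OF inj] card_lists_length_eq[OF A(1)] by (simp add: Ws_def)
  have "P \<in> {P. finite P \<and> P \<subseteq> dpaths \<delta>' x (L0 + 2 * l * k) \<and> separated R P}"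
  proof (intro CollectI conjI)
    show "finite P" unfolding P_def using finWs by simp
    show "P \<subseteq> dpaths \<delta>' x (L0 + 2 * l * k)"
      unfolding P_def dpaths_def using Wpath Wlen Whd by (auto simp: Ws_def)
    show "separated R P" unfolding separated_def P_def
    proof (intro ballI impI)
      fix p q assume "p \<in> W ` Ws" "q \<in> W ` Ws" "p \<noteq> q"
      then obtain w w' where ww: "w \<in> Ws" "w' \<in> Ws" "p = W w" "q = W w'" "w \<noteq> w'" by auto
      obtain i where i: "R < dist (W w ! i) (W w' ! i)" "i < length (W w)"
        using diff[OF ww(1,2,5)] by blast
      have "dist (W w ! i) (W w' ! i) \<le> pdist (W w) (W w')" unfolding pdist_def
        using i(2) by (intro Max_ge) auto
      then show "R < pdist p q" using i ww by simp
    qed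
  qed
  then have "ereal (real (card P)) \<le> sepnum (L0 + 2 * l * k) R \<delta>' x"
    unfolding sepnum_def by (rule SUP_upper)
  then show ?thesis using cardP by simp
qed



lemma Vol_witness:
  fixes x :: "'a::metric_space"
  assumes bg: "bounded_geometry TYPE('a)" and d: "0 < \<delta>" and L: "1 \<le> L"
    and gt: "ereal c < ereal (1 / real L) * lnE (Vol x \<delta> L)"
  shows "\<exists>z\<in>dcomp \<delta> x. exp (c * real L) < real (card (dball \<delta> z L))"
proof -
  have pos: "0 < real L * \<delta> + 1" using d by (simp add: add_nonneg_pos)
  obtain C :: nat where C: "\<And>y::'a. finite (cball y (real L * \<delta> + 1)) \<and> card (cball y (real L * \<delta> + 1)) \<le> C"
    using bg_cball[OF bg pos] by blast
  have "card (dball \<delta> z L) \<le> C" for z :: 'a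
  proof -
    have "dball \<delta> z L \<subseteq> cball z (real L * \<delta> + 1)"
      using dball_subset_cball[of \<delta> z L] d by fastforce
    then show ?thesis using C[of z] by (meson card_mono le_trans)
  qed
  then have "Vol x \<delta> L \<le> ereal (real C)" unfolding Vol_def by (intro SUP_least) simp
  moreover have V1: "1 \<le> Vol x \<delta> L" using Vol_ge1[OF bg] d by auto
  ultimately obtain v where v: "Vol x \<delta> L = ereal v" by (cases "Vol x \<delta> L") auto
  have v1: "1 \<le> v" using V1 v by (simp add: one_ereal_def)
  have "ereal (1 / real L) * lnE (Vol x \<delta> L) = ereal (ln v / real L)" using v v1 by (simp add: lnE_ereal)
  then have "c < ln v / real L" using gt by simp
  then have "c * real L < ln v" using L by (simp add: field_simps)
  moreover have "exp (ln v) = v" using v1 by simp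
  ultimately have "exp (c * real L) < v" by (metis exp_less_cancel_iff)
  then have "ereal (exp (c * real L)) < (SUP z\<in>dcomp \<delta> x. ereal (real (card (dball \<delta> z L))))"
    using v unfolding Vol_def by simp
  then show ?thesis unfolding less_SUP_iff by auto
qed

lemma limsup_ge_freq:
  fixes f :: "nat \<Rightarrow> ereal"
  assumes "\<forall>N. \<exists>n\<ge>N. a \<le> f n"
  shows "a \<le> limsup f"
proof (rule ccontr)
  assume "\<not> a \<le> limsup f"
  then have "eventually (\<lambda>n. f n < a) sequentially" by (intro Limsup_lessD) simp
  then obtain N where "\<forall>n\<ge>N. f n < a" unfolding eventually_sequentially by blast
  then show False using assms by (meson not_le)
qed

lemma E_big:
  fixes x :: "'a::metric_space"
  assumes bg: "bounded_geometry TYPE('a)" and d: "0 < \<delta>" and c: "0 < c"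
    and freq: "\<forall>N. \<exists>L\<ge>N. ereal c < ereal (1 / real L) * lnE (Vol x \<delta> L)"
    and m: "1 \<le> m" and dd: "real m * \<delta> \<le> \<delta>'" and R: "0 < R"
  shows "ereal (c * real m / 16) \<le> limsup (\<lambda>n. ereal (1 / real n) * lnE (sepnum n R \<delta>' x))"
proof -
  obtain C :: nat where C: "\<And>y::'a. finite (cball y R) \<and> card (cball y R) \<le> C"
    using bg_cball[OF bg R] by blast
  have "x \<in> cball x R" using R by simp
  then have "0 < card (cball x R)" using C[of x] by (auto simp: card_gt_0_iff)
  then have "1 \<le> card (cball x R)" by simp
  then have C1: "1 \<le> real C" using C[of x] by linarith
  define N0 where "N0 = nat \<lceil>2 * ln (real C) / c\<rceil> + m + 1"
  obtain L where L: "L \<ge> N0" "ereal c < ereal (1 / real L) * lnE (Vol x \<delta> L)"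
    using freq by blast
  have Lm: "m \<le> L" "1 \<le> L" using L(1) unfolding N0_def by auto
  have "2 * ln (real C) / c \<le> real L"
  proof -
    have "nat \<lceil>2 * ln (real C) / c\<rceil> \<le> L" using L(1) unfolding N0_def by linarith
    then have "real (nat \<lceil>2 * ln (real C) / c\<rceil>) \<le> real L" by (rule of_nat_mono)
    then show ?thesis using real_nat_ceiling_ge[of "2 * ln (real C) / c"] by linarith
  qed
  then have lnC: "ln (real C) \<le> c * real L / 2" using c by (simp add: field_simps)
  obtain z where z: "z \<in> dcomp \<delta> x" "exp (c * real L) < real (card (dball \<delta> z L))"
    using Vol_witness[OF bg d Lm(2) L(2)] by blast
  obtain \<rho> where \<rho>: "dpath \<delta> \<rho>" "hd \<rho> = x" "last \<rho> = z" using z(1) unfolding dcomp_def by blast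
  define L0 where "L0 = length \<rho> - 1"
  have \<rho>len: "length \<rho> = Suc L0" using \<rho>(1) unfolding L0_def dpath_def by simp
  have "\<delta> \<le> real m * \<delta>" using m d by simp
  then have dd': "\<delta> \<le> \<delta>'" using dd by linarith
  have \<rho>': "dpath \<delta>' \<rho>" using \<rho>(1) dd' by (rule dpath_mono)
  define l' where "l' = L div m + 1"
  have l'1: "1 \<le> l'" unfolding l'_def by simp
  have Lml: "L \<le> m * l'"
  proof -
    have "L mod m < m" using m by simp
    moreover have "L div m * m + L mod m = L" by (rule div_mult_mod_eq)
    ultimately have "L < L div m * m + m" by linarith
    then have "L < (L div m + 1) * m" by (simp add: algebra_simps)
    then show ?thesis unfolding l'_def by (simp add: mult.commute)
  qed
  have l'm: "l' * m \<le> 2 * L"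
  proof -
    have h: "(L div m) * m \<le> L" by (simp add: div_times_less_eq_dividend)
    have "l' * m = (L div m) * m + m" unfolding l'_def by simp
    then show ?thesis using h Lm by linarith
  qed
  define B where "B = dball \<delta>' z l'"
  have sub: "dball \<delta> z L \<subseteq> B"
  proof
    fix y assume "y \<in> dball \<delta> z L"
    then obtain p where p: "dpath \<delta> p" "length p = Suc L" "hd p = z" "last p = y" unfolding dball_iff by blast
    have "last p \<in> dball \<delta>' (hd p) l'" using p m d dd Lml by (intro compress) auto
    then show "y \<in> B" using p unfolding B_def by simp
  qed
  have d'0: "0 \<le> \<delta>'" using dd' d by simp
  have finB: "finite B" unfolding B_def using finite_dball[OF bg d'0] .
  have cardB: "exp (c * real L) < real (card B)"
    using z(2) card_mono[OF finB sub] by linarith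
  obtain A where A: "A \<subseteq> B" "\<forall>a\<in>A. \<forall>b\<in>A. a \<noteq> b \<longrightarrow> R < dist a b" "B \<subseteq> (\<Union>a\<in>A. cball a R)"
    using sep_subset[OF finB, of R] R by auto
  have finA: "finite A" using A(1) finB by (rule finite_subset)
  have "card B \<le> card (\<Union>a\<in>A. cball a R)" using A(3) finA C by (intro card_mono) auto
  also have "\<dots> \<le> (\<Sum>a\<in>A. card (cball a R))" using finA by (rule card_UN_le)
  also have "\<dots> \<le> (\<Sum>a\<in>A. C)" using C by (intro sum_mono) auto
  also have "\<dots> = card A * C" by simp
  finally have "real (card B) \<le> real (card A * C)" by (rule of_nat_mono)
  then have "real (card B) \<le> real (card A) * real C" by simp
  then have AC: "exp (c * real L) < real (card A) * real C" using cardB by linarith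
  have "real C = exp (ln (real C))" using C1 by simp
  also have "\<dots> \<le> exp (c * real L / 2)" using lnC by simp
  finally have "real C \<le> exp (c * real L / 2)" .
  then have "exp (c * real L) < real (card A) * exp (c * real L / 2)"
  proof -
    assume h: "real C \<le> exp (c * real L / 2)"
    have "real (card A) * real C \<le> real (card A) * exp (c * real L / 2)"
      using h by (intro mult_left_mono) auto
    then show ?thesis using AC by linarith
  qed
  moreover have "exp (c * real L) = exp (c * real L / 2) * exp (c * real L / 2)"
    by (simp flip: exp_add)
  ultimately have Aexp: "exp (c * real L / 2) < real (card A)" by simp
  have Apos: "0 < real (card A)" using Aexp exp_gt_zero[of "c * real L / 2"] by linarith
  define \<alpha> where "\<alpha> = ln (real (card A))"
  have "ln (exp (c * real L / 2)) < ln (real (card A))" using Aexp Apos by (subst ln_less_cancel_iff) auto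
  then have \<alpha>: "c * real L / 2 < \<alpha>" unfolding \<alpha>_def by simp
  have Asub: "A \<subseteq> dball \<delta>' z l'" using A(1) unfolding B_def .
  have main: "\<forall>N. \<exists>n\<ge>N. ereal (c * real m / 16) \<le> ereal (1 / real n) * lnE (sepnum n R \<delta>' x)"
  proof
    fix N
    define k where "k = N + m * L0 + 1"
    define n where "n = L0 + 2 * l' * k"
    have "1 * k \<le> (2 * l') * k" using l'1 by (intro mult_le_mono1) simp
    then have nN: "n \<ge> N" unfolding n_def using k_def by linarith
    have sp: "ereal (real (card A ^ k)) \<le> sepnum n R \<delta>' x"
      unfolding n_def using many_paths[OF \<rho>' \<rho>(2,3) \<rho>len finA Asub A(2) l'1] .
    have A1: "1 \<le> card A" using Apos by linarith
    have "lnE (ereal (real (card A ^ k))) \<le> lnE (sepnum n R \<delta>' x)"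
      using sp A1 by (intro lnE_mono) (auto simp: one_le_power)
    moreover have "lnE (ereal (real (card A ^ k))) = ereal (real k * \<alpha>)"
      using Apos unfolding \<alpha>_def by (simp add: lnE_ereal ln_realpow)
    ultimately have "ereal (1 / real n) * ereal (real k * \<alpha>) \<le> ereal (1 / real n) * lnE (sepnum n R \<delta>' x)"
      by (intro ereal_mult_left_mono) auto
    moreover have "c * real m / 16 \<le> real k * \<alpha> / real n"
    proof -
      have k1: "1 \<le> real k" unfolding k_def by simp
      have "1 \<le> k" unfolding k_def by simp
      then have "0 < n" using \<open>1 * k \<le> (2 * l') * k\<close> unfolding n_def by linarith
      then have npos: "0 < real n" by simp
      have mL0k: "real m * real L0 \<le> real k" unfolding k_def by simp
      have "real (l' * m) \<le> real (2 * L)" using l'm by (rule of_nat_mono)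
      then have "real l' * real m \<le> 2 * real L" by simp
      then have t1: "real m * (2 * real l' * real k) \<le> 4 * real L * real k"
      proof -
        assume h: "real l' * real m \<le> 2 * real L"
        have "(real l' * real m) * (2 * real k) \<le> (2 * real L) * (2 * real k)"
          using h k1 by (intro mult_right_mono) auto
        then show ?thesis by (simp add: algebra_simps)
      qed
      have "1 * real k \<le> real L * real k" using Lm(2) by (intro mult_right_mono) auto
      then have t2: "real m * real L0 \<le> real L * real k" using mL0k by linarith
      have "c * real m * real n = c * (real m * real L0) + c * (real m * (2 * real l' * real k))"
        unfolding n_def by (simp add: algebra_simps)
      also have "\<dots> \<le> c * (real L * real k) + c * (4 * real L * real k)"
        using t1 t2 c by (intro add_mono mult_left_mono) auto
      also have "\<dots> = 5 * (c * real L) * real k" by (simp add: algebra_simps)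
      also have "\<dots> \<le> 16 * (real k * \<alpha>)"
      proof -
        have "0 \<le> c * real L" using c by simp
        then have "5 * (c * real L) \<le> 16 * \<alpha>" using \<alpha> by linarith
        then have "(5 * (c * real L)) * real k \<le> (16 * \<alpha>) * real k" by (intro mult_right_mono) auto
        then show ?thesis by (simp add: algebra_simps)
      qed
      finally have "c * real m * real n \<le> 16 * (real k * \<alpha>)" .
      moreover have "c * real m / 16 * real n = (c * real m * real n) / 16" by simp
      ultimately have "c * real m / 16 * real n \<le> real k * \<alpha>" by linarith
      then show ?thesis by (subst pos_le_divide_eq[OF npos])
    qed
    then have "ereal (c * real m / 16) \<le> ereal (1 / real n) * ereal (real k * \<alpha>)" by simp
    ultimately show "\<exists>n\<ge>N. ereal (c * real m / 16) \<le> ereal (1 / real n) * lnE (sepnum n R \<delta>' x)"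
      using nN by (meson order_trans)
  qed
  show ?thesis by (rule limsup_ge_freq[OF main])
qed



lemma E_antimono:
  assumes "0 \<le> \<delta>" "R \<le> R'"
  shows "limsup (\<lambda>n. ereal (1 / real n) * lnE (sepnum n R' \<delta> x))
       \<le> limsup (\<lambda>n. ereal (1 / real n) * lnE (sepnum n R \<delta> x))"
proof (rule Limsup_mono, rule always_eventually, rule allI)
  fix n
  have "sepnum n R' \<delta> x \<le> sepnum n R \<delta> x" unfolding sepnum_def
  proof (rule SUP_subset_mono)
    show "{P. finite P \<and> P \<subseteq> dpaths \<delta> x n \<and> separated R' P}
        \<subseteq> {P. finite P \<and> P \<subseteq> dpaths \<delta> x n \<and> separated R P}"
      using assms(2) unfolding separated_def by force
  qed simp
  then have "lnE (sepnum n R' \<delta> x) \<le> lnE (sepnum n R \<delta> x)"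
    using sepnum_ge1[OF assms(1)] by (intro lnE_mono) auto
  then show "ereal (1 / real n) * lnE (sepnum n R' \<delta> x) \<le> ereal (1 / real n) * lnE (sepnum n R \<delta> x)"
    by (intro ereal_mult_left_mono) auto
qed

lemma antimono_tendsto:
  fixes f :: "real \<Rightarrow> ereal"
  assumes mono: "\<And>R R'. R \<le> R' \<Longrightarrow> f R' \<le> f R"
  shows "(f \<longlongrightarrow> (INF R. f R)) at_top"
proof (rule order_tendstoI)
  fix a assume "a < (INF R. f R)"
  then show "eventually (\<lambda>R. a < f R) at_top"
    by (intro always_eventually allI) (meson INF_lower UNIV_I less_le_trans)
next
  fix a assume "(INF R. f R) < a"
  then obtain R0 where "f R0 < a" unfolding INF_less_iff by blast
  then show "eventually (\<lambda>R. f R < a) at_top"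
    unfolding eventually_at_top_linorder using mono by (meson le_less_trans)
qed

lemma part2:
  fixes x :: "'a::metric_space"
  assumes bg: "bounded_geometry TYPE('a)"
    and hyp: "\<exists>\<delta>>0. limsup (\<lambda>l. ereal (1 / real l) * lnE (Vol x \<delta> l)) > 0"
  shows "coarse_entropy x = \<infinity>"
proof -
  obtain \<delta> where d: "0 < \<delta>" and lim: "limsup (\<lambda>l. ereal (1 / real l) * lnE (Vol x \<delta> l)) > 0"
    using hyp by blast
  obtain c where c: "0 < ereal c" "ereal c < limsup (\<lambda>l. ereal (1 / real l) * lnE (Vol x \<delta> l))"
    using ereal_dense2[OF lim] by blast
  have c0: "0 < c" using c(1) by simp
  have freq: "\<forall>N. \<exists>L\<ge>N. ereal c < ereal (1 / real L) * lnE (Vol x \<delta> L)"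
  proof (rule ccontr)
    assume "\<not> ?thesis"
    then obtain N where "\<forall>L\<ge>N. ereal (1 / real L) * lnE (Vol x \<delta> L) \<le> ereal c"
      by (auto simp: not_less)
    then have "eventually (\<lambda>L. ereal (1 / real L) * lnE (Vol x \<delta> L) \<le> ereal c) sequentially"
      unfolding eventually_sequentially by blast
    then have "limsup (\<lambda>l. ereal (1 / real l) * lnE (Vol x \<delta> l)) \<le> ereal c" by (rule Limsup_bounded)
    then show False using c(2) by simp
  qed
  define E where "E R \<delta>' = limsup (\<lambda>n. ereal (1 / real n) * lnE (sepnum n R \<delta>' x))" for R \<delta>'
  have Fbig: "ereal (c * real m / 16) \<le> Lim at_top (\<lambda>R. E R \<delta>')"
    if m: "1 \<le> m" and dd: "real m * \<delta> \<le> \<delta>'" for m \<delta>'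
  proof -
    have d'0: "0 \<le> \<delta>'" using m d dd by (smt (verit) mult_nonneg_nonneg of_nat_0_le_iff)
    have tt: "((\<lambda>R. E R \<delta>') \<longlongrightarrow> (INF R. E R \<delta>')) at_top"
      unfolding E_def by (rule antimono_tendsto) (rule E_antimono[OF d'0])
    then have eq: "Lim at_top (\<lambda>R. E R \<delta>') = (INF R. E R \<delta>')" by (intro tendsto_Lim) auto
    have "eventually (\<lambda>R. ereal (c * real m / 16) \<le> E R \<delta>') at_top"
      unfolding eventually_at_top_linorder E_def
      using E_big[OF bg d c0 freq m dd] by (intro exI[of _ 1]) auto
    then have "ereal (c * real m / 16) \<le> (INF R. E R \<delta>')"
      using tt by (intro tendsto_lowerbound) auto
    then show ?thesis using eq by simp
  qed
  have "((\<lambda>\<delta>'. Lim at_top (\<lambda>R. E R \<delta>')) \<longlongrightarrow> \<infinity>) at_top"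
    unfolding tendsto_PInfty
  proof
    fix r :: real
    define m where "m = nat \<lceil>16 * \<bar>r\<bar> / c\<rceil> + 1"
    have m1: "1 \<le> m" unfolding m_def by simp
    have "16 * \<bar>r\<bar> / c \<le> real (nat \<lceil>16 * \<bar>r\<bar> / c\<rceil>)" by (rule real_nat_ceiling_ge)
    then have "16 * \<bar>r\<bar> / c < real m" unfolding m_def by simp
    then have "16 * \<bar>r\<bar> < c * real m" using c0 by (simp add: field_simps)
    then have rm: "r < c * real m / 16" by linarith
    show "eventually (\<lambda>\<delta>'. ereal r < Lim at_top (\<lambda>R. E R \<delta>')) at_top"
      unfolding eventually_at_top_linorder
    proof (intro exI allI impI)
      fix \<delta>' assume "real m * \<delta> \<le> \<delta>'"
      then have "ereal (c * real m / 16) \<le> Lim at_top (\<lambda>R. E R \<delta>')" by (rule Fbig[OF m1])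
      then show "ereal r < Lim at_top (\<lambda>R. E R \<delta>')" 
      proof -
        have "ereal r < ereal (c * real m / 16)" using rm by simp
        then show ?thesis using \<open>ereal (c * real m / 16) \<le> Lim at_top (\<lambda>R. E R \<delta>')\<close> by (rule less_le_trans)
      qed
    qed
  qed
  then show ?thesis unfolding coarse_entropy_def E_def by (intro tendsto_Lim) auto
qed


theorem mainTheorem14:
  fixes x :: "'a::metric_space"
  assumes bg: "bounded_geometry TYPE('a)"
  shows "((\<forall>\<delta>>0. ((\<lambda>l. ereal (1 / real l) * lnE (Vol x \<delta> l)) \<longlonglongrightarrow> 0))
            \<longrightarrow> coarse_entropy x = 0)
       \<and> ((\<exists>\<delta>>0. limsup (\<lambda>l. ereal (1 / real l) * lnE (Vol x \<delta> l)) > 0)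
            \<longrightarrow> coarse_entropy x = \<infinity>)"
  using part1[OF bg] part2[OF bg] by blast

end
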